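(* Let $(\Omega, \Sigma, \mu)$ be a nonatomic measure space with $0 < \mu(\Omega) < \infty$, let $1 \le p < \infty$, $X = L^p(\mu)$, let $Y$ be a Banach space, let $g \in L^\infty(\mu)$, and let $T \in \mathcal{B}(X, Y)$ be a narrow operator. Then the operator $T g I \in \mathcal{B}(X, Y)$, $f \mapsto T(gf)$, is also narrow.
   Context: $\mathcal{B}(X,Y)$ denotes the bounded linear operators from $X$ to $Y$. A $\Sigma$-measurable function $h$ is a sign on $A \in \Sigma$ if $h$ takes values in $\{-1,0,1\}$ and $h^2 = \mathbb{I}_A$ (indicator of $A$); it is of mean zero if $\int_\Omega h\,d\mu = 0$. An operator $S \in \mathcal{B}(L^p(\mu), Y)$ is narrow if for every $A \in \Sigma$ with $\mu(A) > 0$ and every $\varepsilon > 0$ there exists a mean zero sign $h$ on $A$ with $\|Sh\| < \varepsilon$. *)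

theory Defs
  imports "HOL-Analysis.Analysis"
begin

text \<open>Real L^p(M), 1 <= p < infinity, represented by measurable functions with
  integrable p-th power (elements equal a.e. are identified through the seminorm).\<close>
definition Lp_space :: "'a measure \<Rightarrow> real \<Rightarrow> ('a \<Rightarrow> real) set" where
  "Lp_space M p = {f. f \<in> borel_measurable M \<and> integrable M (\<lambda>x. \<bar>f x\<bar> powr p)}"

definition Lp_norm :: "'a measure \<Rightarrow> real \<Rightarrow> ('a \<Rightarrow> real) \<Rightarrow> real" where
  "Lp_norm M p f = (\<integral>x. \<bar>f x\<bar> powr p \<partial>M) powr (1 / p)"

definition Linf_space :: "'a measure \<Rightarrow> ('a \<Rightarrow> real) set" where
  "Linf_space M = {g. g \<in> borel_measurable M \<and> (\<exists>C. AE x in M. \<bar>g x\<bar> \<le> C)}"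

definition bounded_Lp_op :: "'a measure \<Rightarrow> real \<Rightarrow> (('a \<Rightarrow> real) \<Rightarrow> 'b::real_normed_vector) \<Rightarrow> bool" where
  "bounded_Lp_op M p T \<longleftrightarrow>
     (\<forall>f\<in>Lp_space M p. \<forall>g\<in>Lp_space M p. \<forall>a b::real.
         T (\<lambda>x. a * f x + b * g x) = a *\<^sub>R T f + b *\<^sub>R T g) \<and>
     (\<exists>C. \<forall>f\<in>Lp_space M p. norm (T f) \<le> C * Lp_norm M p f)"

definition nonatomic :: "'a measure \<Rightarrow> bool" where
  "nonatomic M \<longleftrightarrow> (\<forall>A\<in>sets M. 0 < emeasure M A \<longrightarrow>
      (\<exists>B\<in>sets M. B \<subseteq> A \<and> 0 < emeasure M B \<and> emeasure M B < emeasure M A))"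

definition is_sign :: "'a measure \<Rightarrow> ('a \<Rightarrow> real) \<Rightarrow> 'a set \<Rightarrow> bool" where
  "is_sign M h A \<longleftrightarrow> h \<in> borel_measurable M \<and>
     (\<forall>x\<in>space M. h x \<in> {-1, 0, 1} \<and> (h x)\<^sup>2 = indicator A x)"

definition mean_zero :: "'a measure \<Rightarrow> ('a \<Rightarrow> real) \<Rightarrow> bool" where
  "mean_zero M h \<longleftrightarrow> (\<integral>x. h x \<partial>M) = 0"

definition narrow :: "'a measure \<Rightarrow> real \<Rightarrow> (('a \<Rightarrow> real) \<Rightarrow> 'b::real_normed_vector) \<Rightarrow> bool" where
  "narrow M p S \<longleftrightarrow> bounded_Lp_op M p S \<and>
     (\<forall>A\<in>sets M. 0 < emeasure M A \<longrightarrow> (\<forall>\<epsilon>>0. \<exists>h. is_sign M h A \<and> mean_zero M h \<and> norm (S h) < \<epsilon>))"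

end

theory Submission imports Defs "HOL-Analysis.Analysis" begin

lemma Lp_bound:
  assumes fin: "emeasure M (space M) < \<infinity>" and p: "1 \<le> p"
    and f: "f \<in> borel_measurable M" and AE: "AE x in M. \<bar>f x\<bar> \<le> B" and B: "0 \<le> B"
  shows "f \<in> Lp_space M p" "Lp_norm M p f \<le> B * measure M (space M) powr (1/p)"
proof -
  have fm: "finite_measure M" using fin by (intro finite_measureI) auto
  have meas: "(\<lambda>x. \<bar>f x\<bar> powr p) \<in> borel_measurable M" using f by measurable
  have AE2: "AE x in M. \<bar>f x\<bar> powr p \<le> B powr p"
    using AE by eventually_elim (use p in \<open>auto intro: powr_mono2\<close>)
  have int: "integrable M (\<lambda>x. \<bar>f x\<bar> powr p)"
    by (rule finite_measure.integrable_const_bound[OF fm _ meas, where B="B powr p"])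
       (use AE2 in auto)
  then show "f \<in> Lp_space M p" using f unfolding Lp_space_def by auto
  have "(\<integral>x. \<bar>f x\<bar> powr p \<partial>M) \<le> (\<integral>x. B powr p \<partial>M)"
    by (rule integral_mono_AE[OF int _ AE2]) (use fm finite_measure.integrable_const in auto)
  also have "\<dots> = B powr p * measure M (space M)" by simp
  finally have I: "(\<integral>x. \<bar>f x\<bar> powr p \<partial>M) \<le> B powr p * measure M (space M)" .
  have "Lp_norm M p f \<le> (B powr p * measure M (space M)) powr (1/p)"
    unfolding Lp_norm_def using p I by (intro powr_mono2) auto
  also have "\<dots> = B * measure M (space M) powr (1/p)"
    using p B by (simp add: powr_mult powr_powr)
  finally show "Lp_norm M p f \<le> B * measure M (space M) powr (1/p)" .
qed

lemma Lp_norm_nonneg: "0 \<le> Lp_norm M p f"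
  unfolding Lp_norm_def by simp

lemma T_null:
  assumes "bounded_Lp_op M p T" "f \<in> Lp_space M p" "Lp_norm M p f \<le> 0"
  shows "T f = 0"
proof -
  obtain C where C: "\<forall>f\<in>Lp_space M p. norm (T f) \<le> C * Lp_norm M p f"
    using assms(1) unfolding bounded_Lp_op_def by blast
  have "Lp_norm M p f = 0" using assms(3) Lp_norm_nonneg[of M p f] by linarith
  then show ?thesis using C assms(2) by force
qed

lemma T_lin:
  assumes "bounded_Lp_op M p T" "f \<in> Lp_space M p" "g \<in> Lp_space M p"
  shows "T (\<lambda>x. a * f x + b * g x) = a *\<^sub>R T f + b *\<^sub>R T g"
  using assms unfolding bounded_Lp_op_def by blast

lemma T_cong:
  assumes fin: "emeasure M (space M) < \<infinity>" and p: "1 \<le> p" and T: "bounded_Lp_op M p T"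
    and f: "f \<in> Lp_space M p" and g: "g \<in> Lp_space M p" and eq: "\<And>x. x \<in> space M \<Longrightarrow> f x = g x"
  shows "T f = T g"
proof -
  let ?d = "\<lambda>x. f x - g x"
  have dm: "?d \<in> borel_measurable M" using f g unfolding Lp_space_def by auto
  have AE: "AE x in M. \<bar>?d x\<bar> \<le> 0" using eq by auto
  note L = Lp_bound[OF fin p dm AE order_refl]
  have "T ?d = 0" using T_null[OF T L(1)] L(2) by simp
  have "f = (\<lambda>x. 1 * g x + 1 * ?d x)" by auto
  then have "T f = 1 *\<^sub>R T g + 1 *\<^sub>R T ?d" using T_lin[OF T g L(1)] by metis
  then show ?thesis using \<open>T ?d = 0\<close> by simp
qed

lemma sign_props:
  assumes "is_sign M h A" "x \<in> space M"
  shows "\<bar>h x\<bar> \<le> 1" "x \<notin> A \<Longrightarrow> h x = 0" "x \<in> A \<Longrightarrow> h x \<in> {-1, 1}"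
  using assms unfolding is_sign_def by (auto simp: power2_eq_square indicator_def split: if_splits)

lemma sign_meas: "is_sign M h A \<Longrightarrow> h \<in> borel_measurable M"
  unfolding is_sign_def by auto

lemma sign_Lp:
  assumes fin: "emeasure M (space M) < \<infinity>" and p: "1 \<le> p" and s: "is_sign M h A"
  shows "h \<in> Lp_space M p"
  using Lp_bound(1)[OF fin p sign_meas[OF s], of 1] sign_props(1)[OF s] by auto

lemma sign_int:
  assumes fin: "emeasure M (space M) < \<infinity>" and s: "is_sign M h A"
  shows "integrable M h"
proof -
  have fm: "finite_measure M" using fin by (intro finite_measureI) auto
  show ?thesis
    by (rule finite_measure.integrable_const_bound[OF fm _ sign_meas[OF s], where B=1])
       (use sign_props(1)[OF s] in auto)
qed

lemma Linf_mult:
  assumes fin: "emeasure M (space M) < \<infinity>" and p: "1 \<le> p" and g: "g \<in> Linf_space M"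
  obtains K where "0 \<le> K" "AE x in M. \<bar>g x\<bar> \<le> K"
    "\<And>f. f \<in> Lp_space M p \<Longrightarrow> (\<lambda>x. g x * f x) \<in> Lp_space M p \<and>
        Lp_norm M p (\<lambda>x. g x * f x) \<le> K * Lp_norm M p f"
proof -
  obtain C where gm: "g \<in> borel_measurable M" and C: "AE x in M. \<bar>g x\<bar> \<le> C"
    using g unfolding Linf_space_def by auto
  define K where "K = \<bar>C\<bar>"
  have K0: "0 \<le> K" and KA: "AE x in M. \<bar>g x\<bar> \<le> K" using C unfolding K_def by auto
  have "(\<lambda>x. g x * f x) \<in> Lp_space M p \<and> Lp_norm M p (\<lambda>x. g x * f x) \<le> K * Lp_norm M p f"
    if f: "f \<in> Lp_space M p" for f
  proof -
    have fm: "f \<in> borel_measurable M" and fi: "integrable M (\<lambda>x. \<bar>f x\<bar> powr p)"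
      using f unfolding Lp_space_def by auto
    have meas: "(\<lambda>x. \<bar>g x * f x\<bar> powr p) \<in> borel_measurable M" using fm gm by measurable
    have AE2: "AE x in M. \<bar>g x * f x\<bar> powr p \<le> K powr p * \<bar>f x\<bar> powr p"
      using KA
    proof eventually_elim
      case (elim x)
      have "\<bar>g x * f x\<bar> powr p = \<bar>g x\<bar> powr p * \<bar>f x\<bar> powr p"
        by (simp add: abs_mult powr_mult)
      also have "\<dots> \<le> K powr p * \<bar>f x\<bar> powr p"
        using elim p by (intro mult_right_mono powr_mono2) auto
      finally show ?case .
    qed
    have int: "integrable M (\<lambda>x. \<bar>g x * f x\<bar> powr p)"
      by (rule Bochner_Integration.integrable_bound[OF integrable_mult_right[OF fi, of "K powr p"] meas])
         (use AE2 in auto)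
    have "(\<integral>x. \<bar>g x * f x\<bar> powr p \<partial>M) \<le> (\<integral>x. K powr p * \<bar>f x\<bar> powr p \<partial>M)"
      by (rule integral_mono_AE[OF int _ AE2]) (use fi in auto)
    also have "\<dots> = K powr p * (\<integral>x. \<bar>f x\<bar> powr p \<partial>M)" by simp
    finally have I: "(\<integral>x. \<bar>g x * f x\<bar> powr p \<partial>M) \<le> K powr p * (\<integral>x. \<bar>f x\<bar> powr p \<partial>M)" .
    have "Lp_norm M p (\<lambda>x. g x * f x) \<le> (K powr p * (\<integral>x. \<bar>f x\<bar> powr p \<partial>M)) powr (1/p)"
      unfolding Lp_norm_def using p I by (intro powr_mono2) auto
    also have "\<dots> = K * Lp_norm M p f"
      using p K0 unfolding Lp_norm_def by (simp add: powr_mult powr_powr)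
    finally show ?thesis using int fm gm unfolding Lp_space_def by auto
  qed
  then show ?thesis using that K0 KA by blast
qed

lemma abs_mult_le1: "\<bar>a\<bar> \<le> L \<Longrightarrow> \<bar>b\<bar> \<le> 1 \<Longrightarrow> \<bar>a * (b::real)\<bar> \<le> \<bar>L\<bar>"
proof -
  assume "\<bar>a\<bar> \<le> L" "\<bar>b\<bar> \<le> 1"
  then have "\<bar>a\<bar> * \<bar>b\<bar> \<le> \<bar>a\<bar> * 1" by (intro mult_left_mono) auto
  then show ?thesis using \<open>\<bar>a\<bar> \<le> L\<close> by (simp add: abs_mult)
qed

lemma narrow_step:
  assumes fin: "emeasure M (space M) < \<infinity>" and p: "1 \<le> p" and N: "narrow M p T"
    and phim: "phi \<in> borel_measurable M" and L: "\<And>x. x \<in> space M \<Longrightarrow> \<bar>phi x\<bar> \<le> L"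
    and F: "finite F"
  shows "\<forall>B\<in>sets M. (\<forall>x\<in>B. phi x \<in> F) \<longrightarrow> (\<forall>\<eta>>0. \<exists>h. is_sign M h B \<and> mean_zero M h \<and>
            norm (T (\<lambda>x. phi x * h x)) < \<eta>)"
  using F
proof (induction F rule: finite_induct)
  have T: "bounded_Lp_op M p T" using N unfolding narrow_def by auto
  case empty
  show ?case
  proof (intro ballI impI allI)
    fix B :: "'a set" and \<eta> :: real
    assume "B \<in> sets M" "\<forall>x\<in>B. phi x \<in> {}" "0 < \<eta>"
    then have B: "B = {}" by auto
    have s: "is_sign M (\<lambda>x. 0) B" unfolding is_sign_def B by auto
    have z: "(\<lambda>x. phi x * 0) \<in> Lp_space M p" "Lp_norm M p (\<lambda>x. phi x * (0::real)) \<le> 0"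
      using Lp_bound[OF fin p _ _ order_refl, of "\<lambda>x. phi x * 0"] by auto
    have "T (\<lambda>x. phi x * 0) = 0" by (rule T_null[OF T z])
    then show "\<exists>h. is_sign M h B \<and> mean_zero M h \<and> norm (T (\<lambda>x. phi x * h x)) < \<eta>"
      using s \<open>0 < \<eta>\<close> by (intro exI[of _ "\<lambda>x. 0"]) (auto simp: mean_zero_def)
  qed
next
  have T: "bounded_Lp_op M p T" using N unfolding narrow_def by auto
  case (insert c F)
  show ?case
  proof (intro ballI impI allI)
    fix B :: "'a set" and \<eta> :: real
    assume B: "B \<in> sets M" and BF: "\<forall>x\<in>B. phi x \<in> insert c F" and eta: "0 < \<eta>"
    define B1 where "B1 = B \<inter> {x\<in>space M. phi x = c}"
    define B2 where "B2 = B - B1"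
    have B1: "B1 \<in> sets M" unfolding B1_def using B phim by measurable
    have B2: "B2 \<in> sets M" unfolding B2_def using B B1 by auto
    have B2F: "\<forall>x\<in>B2. phi x \<in> F" using BF B sets.sets_into_space[OF B]
      unfolding B2_def B1_def by auto
    obtain h2 where h2: "is_sign M h2 B2" "mean_zero M h2" "norm (T (\<lambda>x. phi x * h2 x)) < \<eta>/2"
      using insert.IH B2 B2F eta by (meson half_gt_zero)
    obtain h1 where h1: "is_sign M h1 B1" "mean_zero M h1" "\<bar>c\<bar> * norm (T h1) < \<eta>/2"
    proof (cases "0 < emeasure M B1")
      case True
      have "0 < \<eta> / (2 * (\<bar>c\<bar> + 1))" using eta by (simp add: field_simps add_pos_nonneg)
      then obtain h where h: "is_sign M h B1" "mean_zero M h" "norm (T h) < \<eta> / (2 * (\<bar>c\<bar> + 1))"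
        using N B1 True unfolding narrow_def by blast
      have "\<bar>c\<bar> * norm (T h) \<le> (\<bar>c\<bar> + 1) * norm (T h)" by (simp add: mult_right_mono)
      also have "\<dots> < (\<bar>c\<bar> + 1) * (\<eta> / (2 * (\<bar>c\<bar> + 1)))"
        using h(3) by (intro mult_strict_left_mono) auto
      also have "\<dots> = \<eta>/2" by (simp add: field_simps add_pos_nonneg)
      finally show ?thesis using that h by blast
    next
      case False
      then have null: "B1 \<in> null_sets M" using B1 by (auto simp: null_sets_def zero_less_iff_neq_zero)
      have s: "is_sign M (indicator B1) B1" unfolding is_sign_def using B1
        by (auto simp: indicator_def)
      have mz: "mean_zero M (indicator B1)" unfolding mean_zero_def using null
        by (simp add: measure_eq_0_null_sets null_sets_def Int_absorb2 sets.sets_into_space)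
      have AE: "AE x in M. \<bar>indicator B1 x\<bar> \<le> (0::real)"
        using AE_not_in[OF null] by eventually_elim auto
      have im: "indicator B1 \<in> borel_measurable M" using B1 by measurable
      note LB = Lp_bound[OF fin p im AE order_refl]
      have "T (indicator B1) = 0"
        using T_null[OF T LB(1)] LB(2) by auto
      then show ?thesis using that s mz eta by auto
    qed
    define h where "h = (\<lambda>x. h1 x + h2 x)"
    have sp: "B1 \<subseteq> B" "B2 \<subseteq> B" "B1 \<inter> B2 = {}" unfolding B2_def B1_def by auto
    have hs: "is_sign M h B"
      unfolding is_sign_def h_def
    proof (rule conjI[OF _ ballI])
      show "(\<lambda>x. h1 x + h2 x) \<in> borel_measurable M"
        using sign_meas[OF h1(1)] sign_meas[OF h2(1)] by measurable
    next
      fix x assume x: "x \<in> space M"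
      consider "x \<in> B1" | "x \<in> B2" | "x \<notin> B" using sp unfolding B2_def by blast
      then show "h1 x + h2 x \<in> {- 1, 0, 1} \<and> (h1 x + h2 x)\<^sup>2 = indicator B x"
      proof cases
        case 1
        then have "x \<notin> B2" "x \<in> B" using sp by auto
        then have "h2 x = 0" "h1 x \<in> {-1,1}" using sign_props[OF h1(1) x] sign_props[OF h2(1) x] 1 by auto
        then show ?thesis using \<open>x \<in> B\<close> by auto
      next
        case 2
        then have "x \<notin> B1" "x \<in> B" using sp by auto
        then have "h1 x = 0" "h2 x \<in> {-1,1}" using sign_props[OF h1(1) x] sign_props[OF h2(1) x] 2 by auto
        then show ?thesis using \<open>x \<in> B\<close> by auto
      next
        case 3
        then have "x \<notin> B1" "x \<notin> B2" using sp by auto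
        then have "h1 x = 0" "h2 x = 0" using sign_props[OF h1(1) x] sign_props[OF h2(1) x] by auto
        then show ?thesis using 3 by auto
      qed
    qed
    have hm: "mean_zero M h" using h1(2) h2(2) sign_int[OF fin h1(1)] sign_int[OF fin h2(1)]
      unfolding mean_zero_def h_def by simp
    have Lh1: "h1 \<in> Lp_space M p" by (rule sign_Lp[OF fin p h1(1)])
    have Lh2: "(\<lambda>x. phi x * h2 x) \<in> Lp_space M p"
    proof -
      have "\<bar>phi x * h2 x\<bar> \<le> \<bar>L\<bar>" if x: "x \<in> space M" for x
        using sign_props(1)[OF h2(1) x] L[OF x] by (intro abs_mult_le1) auto
      then show ?thesis using sign_meas[OF h2(1)] phim
        by (intro Lp_bound(1)[OF fin p, where B="\<bar>L\<bar>"]) (auto intro!: AE_I2)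
    qed
    have Lh: "(\<lambda>x. phi x * h x) \<in> Lp_space M p"
    proof -
      have "\<bar>phi x * h x\<bar> \<le> \<bar>L\<bar>" if x: "x \<in> space M" for x
        using sign_props(1)[OF hs x] L[OF x] by (intro abs_mult_le1) auto
      then show ?thesis using sign_meas[OF hs] phim
        by (intro Lp_bound(1)[OF fin p, where B="\<bar>L\<bar>"]) (auto intro!: AE_I2)
    qed
    have Lc: "(\<lambda>x. c * h1 x + 1 * (phi x * h2 x)) \<in> Lp_space M p"
    proof -
      have "\<bar>c * h1 x + 1 * (phi x * h2 x)\<bar> \<le> \<bar>c\<bar> + \<bar>L\<bar>" if x: "x \<in> space M" for x
      proof -
        have "\<bar>c * h1 x\<bar> \<le> \<bar>\<bar>c\<bar>\<bar>" using sign_props(1)[OF h1(1) x] by (intro abs_mult_le1) auto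
        moreover have "\<bar>phi x * h2 x\<bar> \<le> \<bar>L\<bar>" using sign_props(1)[OF h2(1) x] L[OF x] by (intro abs_mult_le1) auto
        ultimately show ?thesis by simp
      qed
      then show ?thesis using sign_meas[OF h1(1)] sign_meas[OF h2(1)] phim
        by (intro Lp_bound(1)[OF fin p, where B="\<bar>c\<bar> + \<bar>L\<bar>"]) (auto intro!: AE_I2)
    qed
    have "T (\<lambda>x. phi x * h x) = T (\<lambda>x. c * h1 x + 1 * (phi x * h2 x))"
    proof (rule T_cong[OF fin p T Lh Lc])
      fix x assume x: "x \<in> space M"
      show "phi x * h x = c * h1 x + 1 * (phi x * h2 x)"
      proof (cases "x \<in> B1")
        case True
        then have "x \<notin> B2" "phi x = c" using sp unfolding B1_def by auto
        then show ?thesis using sign_props(2)[OF h2(1) x] unfolding h_def by (simp add: algebra_simps)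
      next
        case False
        then show ?thesis using sign_props(2)[OF h1(1) x] unfolding h_def by (simp add: algebra_simps)
      qed
    qed
    also have "\<dots> = c *\<^sub>R T h1 + 1 *\<^sub>R T (\<lambda>x. phi x * h2 x)" by (rule T_lin[OF T Lh1 Lh2])
    finally have "norm (T (\<lambda>x. phi x * h x)) \<le> \<bar>c\<bar> * norm (T h1) + norm (T (\<lambda>x. phi x * h2 x))"
      by (metis norm_scaleR norm_triangle_ineq scaleR_one)
    then have "norm (T (\<lambda>x. phi x * h x)) < \<eta>" using h1(3) h2(3) by linarith
    then show "\<exists>h. is_sign M h B \<and> mean_zero M h \<and> norm (T (\<lambda>x. phi x * h x)) < \<eta>"
      using hs hm by blast
  qed
qed

theorem lemma2p1:
  fixes M :: "'a measure" and p :: real and g :: "'a \<Rightarrow> real"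
    and T :: "('a \<Rightarrow> real) \<Rightarrow> 'b::banach"
  assumes "nonatomic M"
    and "0 < emeasure M (space M)" and "emeasure M (space M) < \<infinity>"
    and "1 \<le> p"
    and "g \<in> Linf_space M"
    and "narrow M p T"
  shows "narrow M p (\<lambda>f. T (\<lambda>x. g x * f x))"
proof -
  note fin = assms(3) and p = assms(4) and N = assms(6)
  have T: "bounded_Lp_op M p T" using N unfolding narrow_def by auto
  obtain C where C: "\<forall>f\<in>Lp_space M p. norm (T f) \<le> C * Lp_norm M p f"
    using T unfolding bounded_Lp_op_def by blast
  define C0 where "C0 = max C 0"
  have C0: "0 \<le> C0" "\<And>f. f \<in> Lp_space M p \<Longrightarrow> norm (T f) \<le> C0 * Lp_norm M p f"
  proof -
    show "0 \<le> C0" unfolding C0_def by simp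
    fix f assume f: "f \<in> Lp_space M p"
    have "C * Lp_norm M p f \<le> C0 * Lp_norm M p f"
      unfolding C0_def by (intro mult_right_mono) (auto simp: Lp_norm_nonneg)
    then show "norm (T f) \<le> C0 * Lp_norm M p f" using C f by (meson order_trans)
  qed
  obtain K where K0: "0 \<le> K" and KA: "AE x in M. \<bar>g x\<bar> \<le> K"
    and Kf: "\<And>f. f \<in> Lp_space M p \<Longrightarrow> (\<lambda>x. g x * f x) \<in> Lp_space M p \<and>
        Lp_norm M p (\<lambda>x. g x * f x) \<le> K * Lp_norm M p f"
    using Linf_mult[OF fin p assms(5)] by blast
  have gm: "g \<in> borel_measurable M" using assms(5) unfolding Linf_space_def by auto
  have bd: "bounded_Lp_op M p (\<lambda>f. T (\<lambda>x. g x * f x))"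
    unfolding bounded_Lp_op_def
  proof (intro conjI ballI allI exI)
    fix f f' a b assume f: "f \<in> Lp_space M p" and f': "f' \<in> Lp_space M p"
    have "(\<lambda>x. g x * (a * f x + b * f' x)) = (\<lambda>x. a * (g x * f x) + b * (g x * f' x))"
      by (simp add: algebra_simps)
    then show "T (\<lambda>x. g x * (a * f x + b * f' x)) = a *\<^sub>R T (\<lambda>x. g x * f x) + b *\<^sub>R T (\<lambda>x. g x * f' x)"
      using T_lin[OF T Kf[OF f, THEN conjunct1] Kf[OF f', THEN conjunct1]] by simp
  next
    fix f assume f: "f \<in> Lp_space M p"
    have "norm (T (\<lambda>x. g x * f x)) \<le> C0 * Lp_norm M p (\<lambda>x. g x * f x)"
      using C0(2) Kf[OF f] by blast
    also have "\<dots> \<le> C0 * (K * Lp_norm M p f)"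
      using Kf[OF f] C0(1) by (intro mult_left_mono) auto
    finally show "norm (T (\<lambda>x. g x * f x)) \<le> C0 * K * Lp_norm M p f" by (simp add: mult.assoc)
  qed
  show ?thesis
    unfolding narrow_def
  proof (intro conjI bd ballI impI allI)
    fix A :: "'a set" and \<epsilon> :: real
    assume A: "A \<in> sets M" and Apos: "0 < emeasure M A" and eps: "0 < \<epsilon>"
    define m where "m = measure M (space M)"
    define mp where "mp = m powr (1/p)"
    have mp0: "0 \<le> mp" unfolding mp_def by simp
    have pos: "0 < (C0 + 1) * (mp + 1)" using C0(1) mp0 by (intro mult_pos_pos) auto
    define \<delta> where "\<delta> = \<epsilon> / 2 / ((C0 + 1) * (mp + 1))"
    have d0: "0 < \<delta>" unfolding \<delta>_def using eps pos by (intro divide_pos_pos) auto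
    have dkey: "(C0 + 1) * (mp + 1) * \<delta> = \<epsilon> / 2" unfolding \<delta>_def
      using pos by (subst times_divide_eq_right, subst nonzero_mult_div_cancel_left) auto
    define gc where "gc = (\<lambda>x. max (-K) (min K (g x)))"
    define phi where "phi = (\<lambda>x. \<delta> * of_int \<lfloor>gc x / \<delta>\<rfloor>)"
    have phim: "phi \<in> borel_measurable M" unfolding phi_def gc_def using gm by measurable
    have phi_le: "phi x \<le> gc x" "gc x - \<delta> < phi x" for x
    proof -
      have f1: "of_int \<lfloor>gc x / \<delta>\<rfloor> \<le> gc x / \<delta>" "gc x / \<delta> - 1 < of_int \<lfloor>gc x / \<delta>\<rfloor>" by linarith+
      have e: "\<delta> * (gc x / \<delta>) = gc x" using d0 by simp
      have "\<delta> * of_int \<lfloor>gc x / \<delta>\<rfloor> \<le> \<delta> * (gc x / \<delta>)" using f1(1) d0 by (intro mult_left_mono) auto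
      then show "phi x \<le> gc x" unfolding phi_def e .
      have "\<delta> * (gc x / \<delta> - 1) < \<delta> * of_int \<lfloor>gc x / \<delta>\<rfloor>" using f1(2) d0 by (intro mult_strict_left_mono) auto
      then show "gc x - \<delta> < phi x" unfolding phi_def using e by (simp add: right_diff_distrib)
    qed
    have gcK: "-K \<le> gc x" "gc x \<le> K" for x unfolding gc_def using K0 by auto
    have phiL: "\<bar>phi x\<bar> \<le> K + \<delta>" for x using phi_le[of x] gcK[of x] by linarith
    define Nn where "Nn = \<lceil>K / \<delta>\<rceil> + 1"
    define F where "F = (\<lambda>k. \<delta> * of_int k) ` {-Nn..Nn}"
    have Ffin: "finite F" unfolding F_def by simp
    have phiF: "phi x \<in> F" for x
    proof -
      have a: "\<lfloor>gc x / \<delta>\<rfloor> \<le> Nn"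
      proof -
        have "gc x / \<delta> \<le> K / \<delta>" using gcK[of x] d0 by (simp add: divide_right_mono)
        then show ?thesis unfolding Nn_def by linarith
      qed
      have b: "- Nn \<le> \<lfloor>gc x / \<delta>\<rfloor>"
      proof -
        have "- K / \<delta> \<le> gc x / \<delta>" using gcK[of x] d0 by (intro divide_right_mono) auto
        then have "- (K / \<delta>) \<le> gc x / \<delta>" by simp
        then show ?thesis unfolding Nn_def by linarith
      qed
      show ?thesis unfolding F_def phi_def using a b by auto
    qed
    obtain h where h: "is_sign M h A" "mean_zero M h" "norm (T (\<lambda>x. phi x * h x)) < \<epsilon>/2"
      using narrow_step[OF fin p N phim phiL Ffin] A phiF eps by (meson half_gt_zero)
    have Lh: "h \<in> Lp_space M p" by (rule sign_Lp[OF fin p h(1)])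
    have Lph: "(\<lambda>x. phi x * h x) \<in> Lp_space M p"
    proof -
      have "\<bar>phi x * h x\<bar> \<le> \<bar>K + \<delta>\<bar>" if x: "x \<in> space M" for x
        using sign_props(1)[OF h(1) x] phiL[of x] by (intro abs_mult_le1) auto
      then show ?thesis using sign_meas[OF h(1)] phim
        by (intro Lp_bound(1)[OF fin p, where B="\<bar>K + \<delta>\<bar>"]) (auto intro!: AE_I2)
    qed
    have dm: "(\<lambda>x. (g x - phi x) * h x) \<in> borel_measurable M"
      using gm phim sign_meas[OF h(1)] by measurable
    have dAE: "AE x in M. \<bar>(g x - phi x) * h x\<bar> \<le> \<delta>"
      using KA AE_space
    proof eventually_elim
      case (elim x)
      then have "gc x = g x" unfolding gc_def by auto
      then have "\<bar>g x - phi x\<bar> \<le> \<delta>" using phi_le[of x] by auto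
      then show ?case using sign_props(1)[OF h(1)] elim abs_mult_le1 d0 by fastforce
    qed
    note Ld = Lp_bound[OF fin p dm dAE less_imp_le[OF d0]]
    have "T (\<lambda>x. g x * h x) = T (\<lambda>x. 1 * (phi x * h x) + 1 * ((g x - phi x) * h x))"
      by (simp add: algebra_simps)
    also have "\<dots> = T (\<lambda>x. phi x * h x) + T (\<lambda>x. (g x - phi x) * h x)"
      using T_lin[OF T Lph Ld(1), of 1 1] by simp
    finally have eq: "T (\<lambda>x. g x * h x) = T (\<lambda>x. phi x * h x) + T (\<lambda>x. (g x - phi x) * h x)" .
    have "norm (T (\<lambda>x. (g x - phi x) * h x)) \<le> C0 * (\<delta> * mp)"
      using C0(2)[OF Ld(1)] Ld(2) C0(1) unfolding mp_def m_def
      by (meson mult_left_mono order_trans)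
    also have "\<dots> < \<epsilon> / 2"
    proof -
      have "C0 * (\<delta> * mp) < (C0 + 1) * (mp + 1) * \<delta>"
        using C0(1) mp0 d0 by (simp add: algebra_simps) (smt (verit) mult_nonneg_nonneg mult_pos_pos)
      then show ?thesis using dkey by simp
    qed
    finally have d2: "norm (T (\<lambda>x. (g x - phi x) * h x)) < \<epsilon> / 2" .
    have "norm (T (\<lambda>x. g x * h x)) < \<epsilon>"
      unfolding eq using d2 h(3) norm_triangle_ineq[of "T (\<lambda>x. phi x * h x)" "T (\<lambda>x. (g x - phi x) * h x)"]
      by linarith
    then show "\<exists>h. is_sign M h A \<and> mean_zero M h \<and> norm (T (\<lambda>x. g x * h x)) < \<epsilon>"
      using h by blast
  qed
qed

end
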